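(* Let $q\in(0,1)$. Every fixed point $p\in\mathcal M_1^+$ of $\mathcal R_q$ other than $(1,0,0,\dots)$ satisfies $p_k>0$ for all $k\ge0$. None of these fixed points is reversible, i.e. for none of them does $T^{(q)}_{ij,k\ell}p_kp_\ell=T^{(q)}_{k\ell,ij}p_ip_j$ hold for all $i,j,k,\ell\ge0$.
   Context: $\mathcal M_1^+$ is the set of probability measures on $\mathbb N_0$, identified with nonnegative sequences summing to $1$. For $q\in[0,1]$, $$T^{(q)}_{ij,k\ell}=C^{(q)}_{k\ell}\,\delta_{i+j,k+\ell}\,(1+\min\{k,\ell,i,j\})\,q^{\max\{0,\ \min\{k,\ell\}-\min\{i,j\}\}},$$ with $0^0=1$ and $C^{(q)}_{k\ell}>0$ chosen so that $\sum_{i,j\ge0}T^{(q)}_{ij,k\ell}=1$. The recombinator on $\mathcal M_1^+$ is $\mathcal R_q(p)_i=\sum_{j,k,\ell\ge0}T^{(q)}_{ij,k\ell}p_kp_\ell$. *)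

theory Defs
  imports "HOL-Analysis.Analysis"
begin

text \<open>Unnormalised weight: (1 + min{k,l,i,j}) * q^(max{0, min{k,l} - min{i,j}}).
  Natural-number subtraction truncates at 0, which realises the max with 0.\<close>
definition wgt :: "real \<Rightarrow> nat \<Rightarrow> nat \<Rightarrow> nat \<Rightarrow> nat \<Rightarrow> real" where
  "wgt q i j k l = real (1 + min (min k l) (min i j)) * q ^ (min k l - min i j)"

text \<open>Normalising constant C_{kl}: chosen so that the sum over all (i,j) of T_{ij,kl} is 1;
  only pairs with i + j = k + l contribute.\<close>
definition Cq :: "real \<Rightarrow> nat \<Rightarrow> nat \<Rightarrow> real" where
  "Cq q k l = 1 / (\<Sum>i\<le>k + l. wgt q i (k + l - i) k l)"

definition Tq :: "real \<Rightarrow> nat \<Rightarrow> nat \<Rightarrow> nat \<Rightarrow> nat \<Rightarrow> real" where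
  "Tq q i j k l = Cq q k l * (if i + j = k + l then 1 else 0) * wgt q i j k l"

definition M1plus :: "(nat \<Rightarrow> real) set" where
  "M1plus = {p. (\<forall>k. 0 \<le> p k) \<and> p sums 1}"

definition Rq :: "real \<Rightarrow> (nat \<Rightarrow> real) \<Rightarrow> nat \<Rightarrow> real" where
  "Rq q p i = (\<Sum>\<^sub>\<infinity>(j, k, l)\<in>(UNIV :: (nat \<times> nat \<times> nat) set). Tq q i j k l * p k * p l)"

definition reversible :: "real \<Rightarrow> (nat \<Rightarrow> real) \<Rightarrow> bool" where
  "reversible q p \<longleftrightarrow> (\<forall>i j k l. Tq q i j k l * p k * p l = Tq q k l i j * p i * p j)"

end

theory Submission
  imports Defs
begin

lemma wgt_pos: "0 < q \<Longrightarrow> 0 < wgt q i j k l"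
  unfolding wgt_def by simp

lemma Cq_pos: "0 < q \<Longrightarrow> 0 < Cq q k l"
  unfolding Cq_def by (auto intro!: sum_pos wgt_pos)

lemma Tq_nonneg: "0 < q \<Longrightarrow> 0 \<le> Tq q i j k l"
  unfolding Tq_def using Cq_pos[of q k l] wgt_pos[of q i j k l] by simp

lemma Tq_pos: "0 < q \<Longrightarrow> i + j = k + l \<Longrightarrow> 0 < Tq q i j k l"
  unfolding Tq_def using Cq_pos[of q k l] wgt_pos[of q i j k l] by simp

lemma Tq_le1: assumes "0 < q" shows "Tq q i j k l \<le> 1"
proof (cases "i + j = k + l")
  case True
  define S where "S = (\<Sum>i'\<le>k + l. wgt q i' (k + l - i') k l)"
  have "j = k + l - i" using True by simp
  then have "wgt q i j k l = wgt q i (k + l - i) k l" by simp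
  also have "\<dots> \<le> S" unfolding S_def
    by (rule member_le_sum) (use True assms wgt_pos in \<open>auto intro: less_imp_le\<close>)
  finally have le: "wgt q i j k l \<le> S" .
  have "0 < wgt q i j k l" using assms wgt_pos by blast
  then have "Tq q i j k l = wgt q i j k l / S" unfolding Tq_def Cq_def S_def using True by simp
  then show ?thesis using le \<open>0 < wgt q i j k l\<close> by simp
next
  case False then show ?thesis unfolding Tq_def by simp
qed

lemma prod_summable:
  assumes "p \<in> M1plus"
  shows "(\<lambda>(k::nat, l::nat). p k * p l) summable_on UNIV"
proof -
  have nn: "\<And>k. 0 \<le> p k" and s: "p sums 1" using assms by (auto simp: M1plus_def)
  have hs: "(p has_sum 1) UNIV" using sums_nonneg_imp_has_sum[OF s] nn by blast
  have "(\<lambda>(k::nat, l::nat). p k * p l) summable_on Sigma UNIV (\<lambda>_. UNIV)"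
  proof (rule summable_on_SigmaI[where g = "\<lambda>k. p k * 1"])
    fix k :: nat assume "k \<in> UNIV"
    have "((\<lambda>l. p k * p l) has_sum (p k * 1)) UNIV" by (rule has_sum_cmult_right[OF hs])
    then show "((\<lambda>l. case (k, l) of (k, l) \<Rightarrow> p k * p l) has_sum (p k * 1)) UNIV" by simp
  next
    have "((\<lambda>k. p k * 1) has_sum 1) UNIV" using hs by simp
    then show "(\<lambda>k. p k * 1) summable_on UNIV" by (rule has_sum_imp_summable)
  next
    fix k l :: nat
    show "0 \<le> (case (k, l) of (k, l) \<Rightarrow> p k * p l)" using nn by simp
  qed
  then show ?thesis by simp
qed

lemma R_summable:
  assumes "p \<in> M1plus" "0 < q"
  shows "(\<lambda>(j, k, l). Tq q i j k l * p k * p l) summable_on UNIV"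
proof -
  have nn: "\<And>k. 0 \<le> p k" using assms by (auto simp: M1plus_def)
  define g where "g = (\<lambda>(j, k, l). Tq q i j k l * p k * p l)"
  define h where "h = (\<lambda>(k::nat, l::nat). (k + l - i, k, l))"
  have inj: "inj_on h UNIV" unfolding h_def inj_on_def by auto
  have "(g \<circ> h) summable_on UNIV"
  proof (rule summable_on_comparison_test[OF prod_summable[OF assms(1)]])
    fix x :: "nat \<times> nat"
    obtain k l where x: "x = (k, l)" by force
    have "Tq q i (k + l - i) k l * p k \<le> 1 * p k"
      by (rule mult_right_mono) (use Tq_le1[OF assms(2)] nn in auto)
    then have "Tq q i (k + l - i) k l * p k * p l \<le> 1 * p k * p l"
      by (rule mult_right_mono) (use nn in auto)
    then show "(g \<circ> h) x \<le> (case x of (k, l) \<Rightarrow> p k * p l)"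
      unfolding x g_def h_def by simp
    show "0 \<le> (g \<circ> h) x"
      using Tq_nonneg[OF assms(2)] nn unfolding x g_def h_def by simp
  qed
  then have "g summable_on h ` UNIV" using summable_on_reindex[OF inj] by blast
  moreover have "g summable_on h ` UNIV \<longleftrightarrow> g summable_on UNIV"
  proof (rule summable_on_cong_neutral)
    fix x assume "x \<in> UNIV - h ` UNIV"
    then obtain j k l where x: "x = (j, k, l)" and nx: "x \<notin> h ` UNIV" by (cases x) auto
    have "i + j \<noteq> k + l"
    proof
      assume "i + j = k + l"
      then have "x = h (k, l)" unfolding x h_def by simp
      then show False using nx by auto
    qed
    then show "g x = 0" unfolding g_def x Tq_def by simp
  qed auto
  ultimately show ?thesis unfolding g_def by simp
qed

lemma single_le:
  assumes "p \<in> M1plus" "0 < q" "Rq q p = p"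
  shows "Tq q i j k l * p k * p l \<le> p i"
proof -
  have nn: "\<And>k. 0 \<le> p k" using assms by (auto simp: M1plus_def)
  let ?g = "\<lambda>(j, k, l). Tq q i j k l * p k * p l"
  have "infsum ?g {(j, k, l)} \<le> infsum ?g UNIV"
    by (rule infsum_mono_neutral) (use R_summable[OF assms(1,2)] Tq_nonneg[OF assms(2)] nn in auto)
  also have "infsum ?g UNIV = p i" using fun_cong[OF assms(3), of i] unfolding Rq_def by simp
  finally show ?thesis by simp
qed

lemma Tq_vals:
  assumes "0 < q"
  shows "Tq q 0 2 1 1 = q/(2+2*q)" "Tq q 1 1 0 2 = 1/3" "Tq q 0 3 1 2 = q/(4+2*q)"
    "Tq q 1 2 0 3 = 1/4" "Tq q 1 3 2 2 = 2*q/(3+4*q+2*q^2)" "Tq q 2 2 1 3 = 2/(6+2*q)"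
  using assms by (simp_all add: Tq_def Cq_def wgt_def numeral_eq_Suc atMost_Suc field_simps)

lemma poly_ne:
  fixes q :: real
  assumes "0 < q" "q < 1"
  shows "2*q/(2+q) \<noteq> (q*(6+2*q)/(3+4*q+2*q^2)) * (3*q/(2+2*q))"
proof
  assume h: "2*q/(2+q) = (q*(6+2*q)/(3+4*q+2*q^2)) * (3*q/(2+2*q))"
  have p1: "3+4*q+2*q^2 > 0" using assms by (simp add: add_pos_nonneg)
  have p2: "(3+4*q+2*q^2)*(2+2*q) > 0" using p1 assms by simp
  have "(q*(6+2*q)/(3+4*q+2*q^2)) * (3*q/(2+2*q)) = ((q*(6+2*q))*(3*q)) / ((3+4*q+2*q^2)*(2+2*q))"
    by simp
  with h have "2*q/(2+q) = ((q*(6+2*q))*(3*q)) / ((3+4*q+2*q^2)*(2+2*q))" by simp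
  then have "2*q*((3+4*q+2*q^2)*(2+2*q)) = (q*(6+2*q))*(3*q)*(2+q)"
    using p2 assms by (subst (asm) frac_eq_eq) auto
  then have "q * (2 * (q - 1) * (q^2 - 2*q - 6)) = 0"
    by (simp add: algebra_simps power2_eq_square power3_eq_cube)
  moreover have "(q - 1) * (q^2 - 2*q - 6) > 0"
  proof (rule mult_neg_neg)
    show "q - 1 < 0" using assms by simp
    have "q^2 < 1" using assms by (simp add: power_less_one_iff abs_less_iff)
    then show "q^2 - 2*q - 6 < 0" using assms by simp
  qed
  ultimately show False using assms by simp
qed

theorem proposition15:
  fixes q :: real and p :: "nat \<Rightarrow> real"
  assumes "0 < q" and "q < 1"
    and "p \<in> M1plus"
    and "Rq q p = p"
    and "p \<noteq> (\<lambda>k. if k = 0 then 1 else 0)"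
  shows "(\<forall>k. 0 < p k) \<and> \<not> reversible q p"
proof -
  have nn: "\<And>k. 0 \<le> p k" and s: "p sums 1" using assms(3) by (auto simp: M1plus_def)
  note sl = single_le[OF assms(3) assms(1) assms(4)]
  have "\<exists>n\<ge>1. p n \<noteq> 0"
  proof (rule ccontr)
    assume "\<not> ?thesis"
    then have z: "\<And>n. n \<noteq> 0 \<Longrightarrow> p n = 0" by auto
    have "p sums (\<Sum>n\<in>{0}. p n)" by (rule sums_finite) (use z in auto)
    then have "p 0 = 1" using s sums_unique2 by force
    then have "p = (\<lambda>k. if k = 0 then 1 else 0)" using z by auto
    then show False using assms(5) by simp
  qed
  then obtain n where n1: "n \<ge> 1" and pn: "0 < p n" using nn by (metis less_eq_real_def)
  have step: "0 < p i" if "0 < p N" "i \<le> 2 * N" for i N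
  proof -
    have "0 < Tq q i (2*N - i) N N" by (rule Tq_pos) (use assms(1) that in auto)
    then have "0 < Tq q i (2*N - i) N N * p N * p N" using that by simp
    then show ?thesis using sl[of i "2*N - i" N N] by linarith
  qed
  have pw: "0 < p (2^m * n)" for m
  proof (induction m)
    case 0 then show ?case using pn by simp
  next
    case (Suc m) then show ?case using step[of "2^m * n" "2^Suc m * n"] by simp
  qed
  have pos: "\<forall>k. 0 < p k"
  proof
    fix k
    have "k < 2^k" by (rule less_exp)
    also have "2^k \<le> 2^k * n" using n1 by simp
    finally show "0 < p k" using step[OF pw[of k], of k] by simp
  qed
  have nrev: "\<not> reversible q p"
  proof
    assume r: "reversible q p"
    have E2: "Tq q 0 2 1 1 * p 1 * p 1 = Tq q 1 1 0 2 * p 0 * p 2" using r unfolding reversible_def by blast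
    have E3: "Tq q 0 3 1 2 * p 1 * p 2 = Tq q 1 2 0 3 * p 0 * p 3" using r unfolding reversible_def by blast
    have E4: "Tq q 1 3 2 2 * p 2 * p 2 = Tq q 2 2 1 3 * p 1 * p 3" using r unfolding reversible_def by blast
    define A where "A = 3*q/(2+2*q)"
    define B where "B = 2*q/(2+q)"
    define D where "D = q*(6+2*q)/(3+4*q+2*q^2)"
    have p1: "3+4*q+2*q^2 > 0" using assms by (simp add: add_pos_nonneg)
    have A: "p 0 * p 2 = A * (p 1 * p 1)" using E2 assms(1) unfolding A_def Tq_vals[OF assms(1)]
      by (simp add: field_simps)
    have B: "p 0 * p 3 = B * (p 1 * p 2)" using E3 assms(1) unfolding B_def Tq_vals[OF assms(1)]
      by (simp add: field_simps)
    have D: "p 1 * p 3 = D * (p 2 * p 2)" using E4 assms(1) p1 unfolding D_def Tq_vals[OF assms(1)]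
      by (simp add: field_simps)
    have "B * (p 1 * p 1 * p 2) = p 1 * (p 0 * p 3)" using B by simp
    also have "\<dots> = p 0 * (p 1 * p 3)" by simp
    also have "\<dots> = D * p 2 * (p 0 * p 2)" using D by simp
    also have "\<dots> = (D * A) * (p 1 * p 1 * p 2)" using A by simp
    finally have "B = D * A" using pos by (metis mult_cancel_right mult_pos_pos less_irrefl)
    then show False using poly_ne[OF assms(1,2)] unfolding A_def B_def D_def by simp
  qed
  show ?thesis using pos nrev by blast
qed

end
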